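(* Let $p(t)=\sum_{k=0}^\infty a_kt^k$ be a real power series with $-1<a_i<1$ for all $i\ge0$ and $\sum_{i=0}^\infty|a_i|\le1$, and let $p^{[1]}=p$, $p^{[n+1]}=p(p^{[n]})$, $p^{[n]}(t)=\sum_k a_k^{[n]}t^k$. If $\lim_{n\to\infty}p^{[n]}(0)=\lim_{n\to\infty}a_0^{[n]}=a$ exists, then $\lim_{n\to\infty}p^{[n]}(t)=a$ for every $t\in(-1,1)$. *)

theory Defs
  imports Complex_Main
begin

definition pser :: "(nat \<Rightarrow> real) \<Rightarrow> real \<Rightarrow> real" where
  "pser a t = (\<Sum>k. a k * t ^ k)"

end

theory Submission
  imports Defs "HOL-Complex_Analysis.Riemann_Mapping"
begin

lemma ps_summable:
  fixes z :: "'a::{real_normed_field,banach}"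
  assumes s: "summable (\<lambda>i. \<bar>a i\<bar>)" and z: "norm z \<le> 1"
  shows "summable (\<lambda>k. norm (of_real (a k) * z ^ k))"
proof (rule summable_comparison_test[OF _ s])
  show "\<exists>N. \<forall>n\<ge>N. norm (norm (of_real (a n) * z ^ n)) \<le> \<bar>a n\<bar>"
  proof (intro exI allI impI)
    fix n :: nat
    have "norm z ^ n \<le> 1" using z by (simp add: power_le_one)
    then show "norm (norm (of_real (a n) * z ^ n)) \<le> \<bar>a n\<bar>"
      by (simp add: norm_mult norm_power mult_left_le)
  qed
qed

lemma ps_bound:
  fixes z :: "'a::{real_normed_field,banach}"
  assumes s: "summable (\<lambda>i. \<bar>a i\<bar>)" and le1: "(\<Sum>i. \<bar>a i\<bar>) \<le> 1"
    and z: "norm z \<le> 1"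
  shows "norm (\<Sum>k. of_real (a k) * z ^ k) \<le> \<bar>a 0\<bar> + norm z * (1 - \<bar>a 0\<bar>)"
proof -
  let ?f = "\<lambda>k. norm (of_real (a k) * z ^ k)"
  have sf: "summable ?f" by (rule ps_summable[OF s z])
  have "norm (\<Sum>k. of_real (a k) * z ^ k) \<le> (\<Sum>k. ?f k)" by (rule summable_norm[OF sf])
  also have "\<dots> = \<bar>a 0\<bar> + (\<Sum>k. ?f (Suc k))"
    using suminf_split_head[OF sf] by simp
  also have "(\<Sum>k. ?f (Suc k)) \<le> (\<Sum>k. norm z * \<bar>a (Suc k)\<bar>)"
  proof (rule suminf_le)
    fix k
    have "norm z ^ k \<le> 1" using z by (simp add: power_le_one)
    then have "\<bar>a (Suc k)\<bar> * norm z ^ k \<le> \<bar>a (Suc k)\<bar>" using mult_left_le[of "norm z ^ k" "\<bar>a (Suc k)\<bar>"] by simp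
    then have "norm z * (\<bar>a (Suc k)\<bar> * norm z ^ k) \<le> norm z * \<bar>a (Suc k)\<bar>"
      by (simp add: mult_left_mono)
    moreover have "?f (Suc k) = \<bar>a (Suc k)\<bar> * (norm z * norm z ^ k)"
      by (simp only: norm_mult norm_of_real norm_power power_Suc)
    ultimately show "?f (Suc k) \<le> norm z * \<bar>a (Suc k)\<bar>"
      by (simp only: mult.left_commute)
    show "summable (\<lambda>k. ?f (Suc k))" by (rule summable_Suc_iff[THEN iffD2, OF sf])
    show "summable (\<lambda>k. norm z * \<bar>a (Suc k)\<bar>)"
      by (rule summable_mult[OF summable_Suc_iff[THEN iffD2, OF s]])
  qed
  then have "\<bar>a 0\<bar> + (\<Sum>k. ?f (Suc k)) \<le> \<bar>a 0\<bar> + (\<Sum>k. norm z * \<bar>a (Suc k)\<bar>)"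
    by linarith
  also have "(\<Sum>k. norm z * \<bar>a (Suc k)\<bar>) = norm z * ((\<Sum>k. \<bar>a k\<bar>) - \<bar>a 0\<bar>)"
  proof -
    have "summable (\<lambda>k. \<bar>a (Suc k)\<bar>)" by (rule summable_Suc_iff[THEN iffD2, OF s])
    then have "(\<Sum>k. norm z * \<bar>a (Suc k)\<bar>) = norm z * (\<Sum>k. \<bar>a (Suc k)\<bar>)"
      by (rule suminf_mult)
    also have "(\<Sum>k. \<bar>a (Suc k)\<bar>) = (\<Sum>k. \<bar>a k\<bar>) - \<bar>a 0\<bar>"
      by (rule suminf_split_head[OF s])
    finally show ?thesis .
  qed
  also have "norm z * ((\<Sum>k. \<bar>a k\<bar>) - \<bar>a 0\<bar>) \<le> norm z * (1 - \<bar>a 0\<bar>)"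
    using le1 by (simp add: mult_left_mono)
  finally show ?thesis by simp
qed

lemma ps_lt1:
  fixes z :: "'a::{real_normed_field,banach}"
  assumes s: "summable (\<lambda>i. \<bar>a i\<bar>)" and le1: "(\<Sum>i. \<bar>a i\<bar>) \<le> 1"
    and a0: "\<bar>a 0\<bar> < 1" and z: "norm z < 1"
  shows "norm (\<Sum>k. of_real (a k) * z ^ k) < 1"
proof -
  have "norm z * (1 - \<bar>a 0\<bar>) < 1 - \<bar>a 0\<bar>" using z a0 by simp
  then show ?thesis using ps_bound[OF s le1, of z] z by linarith
qed

lemma pser_eq: "pser a = (\<lambda>x. \<Sum>k. of_real (a k) * x ^ k)"
  by (auto simp: pser_def fun_eq_iff)

definition PP :: "(nat \<Rightarrow> real) \<Rightarrow> complex \<Rightarrow> complex" where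
  "PP a z = (\<Sum>k. complex_of_real (a k) * z ^ k)"

lemma PP_real:
  assumes s: "summable (\<lambda>i. \<bar>a i\<bar>)" and t: "\<bar>t\<bar> \<le> 1"
  shows "PP a (of_real t) = of_real (pser a t)"
proof -
  have "summable (\<lambda>k. a k * t ^ k)"
    using summable_norm_cancel[of "\<lambda>k. a k * t ^ k"] ps_summable[OF s, of t] t by simp
  then have "(\<lambda>k. complex_of_real (a k * t ^ k)) sums complex_of_real (pser a t)"
    unfolding pser_def by (intro sums_of_real summable_sums)
  then have "(\<lambda>k. complex_of_real (a k) * complex_of_real t ^ k) sums complex_of_real (pser a t)"
    by (simp only: of_real_mult of_real_power)
  then show ?thesis unfolding PP_def by (simp add: sums_iff)
qed

lemma PP_holo:
  assumes s: "summable (\<lambda>i. \<bar>a i\<bar>)"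
  shows "PP a holomorphic_on ball 0 1"
proof -
  have sm: "summable (\<lambda>n. complex_of_real (a n) * 1 ^ n)"
    using summable_norm_cancel[of "\<lambda>n. complex_of_real (a n) * 1 ^ n"] ps_summable[OF s, of "1::complex"] by simp
  show ?thesis unfolding holomorphic_on_def
  proof
    fix z :: complex assume "z \<in> ball 0 1"
    then have "norm z < norm (1::complex)" by simp
    from termdiffs_strong[OF sm this] show "PP a field_differentiable at z within ball 0 1"
      unfolding PP_def field_differentiable_def
      by (meson has_field_derivative_at_within)
  qed
qed

definition MM :: "real \<Rightarrow> complex \<Rightarrow> complex" where
  "MM c = Moebius_function 0 (complex_of_real c)"

lemma MM_real: "MM c (of_real u) = of_real ((u - c) / (1 - c * u))"
  by (simp add: MM_def Moebius_function_simple)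

definition dlt :: "real \<Rightarrow> real \<Rightarrow> real" where
  "dlt u v = \<bar>u - v\<bar> / (1 - u * v)"

lemma norm_MM_real:
  assumes "\<bar>u\<bar> < 1" "\<bar>c\<bar> < 1"
  shows "norm (MM c (of_real u)) = dlt u c"
proof -
  have "\<bar>c * u\<bar> < 1" using mult_strict_mono'[of "\<bar>c\<bar>" 1 "\<bar>u\<bar>" 1] assms by (simp add: abs_mult)
  then have "0 < 1 - c * u" by linarith
  then show ?thesis unfolding MM_real norm_of_real by (simp add: dlt_def abs_divide mult.commute)
qed
lemma arith1:
  fixes c u a1 :: real
  assumes "0 \<le> c" "c < 1" "\<bar>a1\<bar> < 1" "c + \<bar>a1\<bar> \<le> 1" "u * (1 - c/2) = c - 1/2"
    "\<bar>u - c - a1 / 2\<bar> \<le> (1 - c - \<bar>a1\<bar>) / 4"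
  shows False
proof -
  have d: "0 < 2 - c" using assms by simp
  have u: "u - c = - ((1 - c^2) / (2 - c))" using assms(5) d by (simp add: field_simps power2_eq_square) 
  have "(1 - c^2) / (2 - c) - \<bar>a1\<bar> / 2 \<le> (1 - c - \<bar>a1\<bar>) / 4"
  proof -
    have "0 \<le> (1 - c^2) / (2 - c)" using assms d by (simp add: power2_eq_square mult_le_one)
    then have "\<bar>u - c\<bar> = (1 - c^2) / (2 - c)" unfolding u abs_minus_cancel by (rule abs_of_nonneg)
    moreover have "\<bar>u - c\<bar> - \<bar>a1\<bar> / 2 \<le> \<bar>u - c - a1 / 2\<bar>" using abs_triangle_ineq2[of "u - c" "a1/2"] by simp
    ultimately show ?thesis using assms(6) by linarith
  qed
  then have "4 * (1 - c^2) - 2 * \<bar>a1\<bar> * (2 - c) \<le> (1 - c - \<bar>a1\<bar>) * (2 - c)"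
    using d by (simp add: field_simps)
  then have "(1-c)*(2+5*c) - \<bar>a1\<bar>*(2-c) \<le> 0" by (simp add: algebra_simps power2_eq_square)
  moreover have "\<bar>a1\<bar>*(2-c) \<le> (1 - c) * (2 - c)" using assms d by (simp add: mult_right_mono)
  ultimately have "(1-c)*(2+5*c) - (1 - c) * (2 - c) \<le> 0 \<and> \<bar>a1\<bar>*(2-c) \<le> (1 - c) * (2 - c)" by linarith
  then have "6 * c * (1 - c) \<le> 0" by (simp add: algebra_simps)
  then have "c = 0" using assms by (smt (verit) mult_pos_pos)
  then show False using \<open>(1-c)*(2+5*c) - \<bar>a1\<bar>*(2-c) \<le> 0\<close> assms by simp
qed

lemma den_pos: "\<bar>L::real\<bar> < 1 \<Longrightarrow> \<bar>u\<bar> < 1 \<Longrightarrow> 0 < 1 - L * u"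
proof -
  assume "\<bar>L\<bar> < 1" "\<bar>u\<bar> < 1"
  then have "\<bar>L * u\<bar> < 1" using mult_strict_mono'[of "\<bar>L\<bar>" 1 "\<bar>u\<bar>" 1] by (simp add: abs_mult)
  then show ?thesis by linarith
qed

locale coefs =
  fixes a :: "nat \<Rightarrow> real"
  assumes s: "summable (\<lambda>i. \<bar>a i\<bar>)"
    and le1: "(\<Sum>i. \<bar>a i\<bar>) \<le> 1"
    and a0: "\<bar>a 0\<bar> < 1"
    and a1: "\<bar>a 1\<bar> < 1"
begin

lemma PP_lt1: "norm z < 1 \<Longrightarrow> norm (PP a z) < 1"
  unfolding PP_def by (rule ps_lt1[OF s le1 a0])

lemma p_lt1: "\<bar>x\<bar> < 1 \<Longrightarrow> \<bar>pser a x\<bar> < 1"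
  using PP_lt1[of "of_real x"] PP_real[OF s, of x] by simp

lemma dlt_pos: "\<bar>x\<bar> < 1 \<Longrightarrow> \<bar>y\<bar> < 1 \<Longrightarrow> x \<noteq> y \<Longrightarrow> 0 < dlt x y"
proof -
  assume "\<bar>x\<bar> < 1" "\<bar>y\<bar> < 1" "x \<noteq> y"
  moreover have "\<bar>x * y\<bar> < 1" using mult_strict_mono'[of "\<bar>x\<bar>" 1 "\<bar>y\<bar>" 1] \<open>\<bar>x\<bar> < 1\<close> \<open>\<bar>y\<bar> < 1\<close> by (simp add: abs_mult)
  ultimately show ?thesis by (simp add: dlt_def)
qed

lemma SP:
  assumes x: "\<bar>x\<bar> < 1" and y: "\<bar>y\<bar> < 1"
  shows "dlt (pser a x) (pser a y) \<le> dlt x y"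
   and "x \<noteq> y \<Longrightarrow> dlt (pser a x) (pser a y) = dlt x y \<Longrightarrow>
        \<exists>\<alpha>. (\<forall>w. norm w < 1 \<longrightarrow> MM (pser a y) (PP a (MM (-y) w)) = \<alpha> * w) \<and> norm \<alpha> = 1"
proof -
  define b where "b = pser a y"
  define g where "g = (\<lambda>w. MM b (PP a (MM (-y) w)))"
  have b: "\<bar>b\<bar> < 1" unfolding b_def by (rule p_lt1[OF y])
  have nb: "norm (complex_of_real b) < 1" "norm (complex_of_real (-y)) < 1" "norm (complex_of_real y) < 1"
    using b y by auto
  have holo: "g holomorphic_on ball 0 1"
  proof -
    have h1: "MM (-y) holomorphic_on ball 0 1" unfolding MM_def
      by (rule Moebius_function_holomorphic[OF nb(2)])
    have h2: "PP a holomorphic_on ball 0 1" by (rule PP_holo[OF s])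
    have h3: "MM b holomorphic_on ball 0 1" unfolding MM_def
      by (rule Moebius_function_holomorphic[OF nb(1)])
    have i1: "MM (-y) ` ball 0 1 \<subseteq> ball 0 1"
      using Moebius_function_norm_lt_1[OF nb(2)] by (auto simp: MM_def)
    have i2: "PP a ` ball 0 1 \<subseteq> ball 0 1"
      using PP_lt1 by auto
    have "(PP a \<circ> MM (-y)) holomorphic_on ball 0 1"
      by (rule holomorphic_on_compose_gen[OF h1 h2 i1])
    moreover have "(PP a \<circ> MM (-y)) ` ball 0 1 \<subseteq> ball 0 1" using i1 i2 by auto
    ultimately have "(MM b \<circ> (PP a \<circ> MM (-y))) holomorphic_on ball 0 1"
      by (rule holomorphic_on_compose_gen[OF _ h3])
    then show ?thesis unfolding g_def o_def .
  qed
  have g0: "g 0 = 0"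
  proof -
    have "MM (-y) 0 = of_real y" by (simp add: MM_def Moebius_function_of_zero)
    moreover have "PP a (of_real y) = of_real b" unfolding b_def using y by (simp add: PP_real[OF s])
    ultimately show ?thesis by (simp add: g_def MM_def Moebius_function_eq_zero)
  qed
  have gno: "norm (g z) < 1" if "norm z < 1" for z
  proof -
    have "norm (MM (-y) z) < 1" using Moebius_function_norm_lt_1[OF nb(2) that] by (simp add: MM_def)
    then have "norm (PP a (MM (-y) z)) < 1" by (rule PP_lt1)
    then show ?thesis unfolding g_def MM_def by (rule Moebius_function_norm_lt_1[OF nb(1)])
  qed
  define w where "w = MM y (of_real x)"
  have w1: "norm w < 1" unfolding w_def MM_def
    by (rule Moebius_function_norm_lt_1) (use x y in auto)
  have inv: "MM (-y) w = of_real x" unfolding w_def MM_def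
    by (rule Moebius_function_compose) (use x y in auto)
  have gw: "norm (g w) = dlt (pser a x) (pser a y)"
  proof -
    have "g w = MM b (of_real (pser a x))" unfolding g_def inv using x by (simp add: PP_real[OF s])
    then show ?thesis using norm_MM_real[OF p_lt1[OF x] b] unfolding b_def by simp
  qed
  have nw: "norm w = dlt x y" unfolding w_def using x y by (simp add: norm_MM_real)
  show "dlt (pser a x) (pser a y) \<le> dlt x y"
    using Schwarz_Lemma(1)[OF holo g0 gno w1] gw nw by simp
  assume ne: "x \<noteq> y" and eq: "dlt (pser a x) (pser a y) = dlt x y"
  have "w \<noteq> 0" using nw dlt_pos[OF x y ne] by auto
  then have ex: "\<exists>z. norm z < 1 \<and> z \<noteq> 0 \<and> norm (g z) = norm z"
  proof (intro exI conjI)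
    show "norm w < 1" "w \<noteq> 0" by fact+
    show "norm (g w) = norm w" using gw nw eq by simp
  qed
  have "\<exists>\<alpha>. (\<forall>z. norm z < 1 \<longrightarrow> g z = \<alpha> * z) \<and> norm \<alpha> = 1"
    apply (rule Schwarz_Lemma(3)[of g w])
    using holo g0 gno w1 ex by auto
  then show "\<exists>\<alpha>. (\<forall>w. norm w < 1 \<longrightarrow> MM (pser a y) (PP a (MM (-y) w)) = \<alpha> * w) \<and> norm \<alpha> = 1"
    unfolding g_def b_def .
qed

lemma tail2:
  "(\<Sum>n. \<bar>a (n + 2)\<bar>) = (\<Sum>i. \<bar>a i\<bar>) - \<bar>a 0\<bar> - \<bar>a 1\<bar>"
  using suminf_split_initial_segment[OF s, of 2] by (simp add: numeral_2_eq_2)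

lemma a01: "\<bar>a 0\<bar> + \<bar>a 1\<bar> \<le> 1"
proof -
  have "0 \<le> (\<Sum>n. \<bar>a (n + 2)\<bar>)"
    by (rule suminf_nonneg[OF summable_ignore_initial_segment[OF s]]) simp
  then show ?thesis using tail2 le1 by linarith
qed

lemma Bnd:
  assumes x: "\<bar>x\<bar> \<le> 1"
  shows "\<bar>pser a x - a 0 - a 1 * x\<bar> \<le> (1 - \<bar>a 0\<bar> - \<bar>a 1\<bar>) * x^2"
proof -
  define f where "f = (\<lambda>k. a k * x ^ k)"
  have sf: "summable (\<lambda>k. \<bar>f k\<bar>)" using ps_summable[OF s, of x] x by (simp add: f_def)
  have sf': "summable f" using summable_norm_cancel[of f] sf by simp
  have "pser a x = (\<Sum>n. f (n + 2)) + (\<Sum>i<2. f i)"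
    unfolding pser_def f_def[symmetric] by (rule suminf_split_initial_segment[OF sf'])
  moreover have "(\<Sum>i<2. f i) = a 0 + a 1 * x" by (simp add: numeral_2_eq_2 f_def)
  ultimately have eq: "pser a x - a 0 - a 1 * x = (\<Sum>n. f (n + 2))" by simp
  have st: "summable (\<lambda>n. \<bar>f (n + 2)\<bar>)" by (rule summable_ignore_initial_segment[OF sf])
  have "\<bar>\<Sum>n. f (n + 2)\<bar> \<le> (\<Sum>n. \<bar>f (n + 2)\<bar>)"
    using summable_norm[of "\<lambda>n. f (n + 2)"] st by simp
  also have "\<dots> \<le> (\<Sum>n. \<bar>a (n + 2)\<bar> * x^2)"
  proof (rule suminf_le)
    fix n
    have "\<bar>x\<bar> ^ n \<le> 1" using x by (simp add: power_le_one)
    then have "\<bar>a (n + 2)\<bar> * \<bar>x\<bar> ^ n \<le> \<bar>a (n + 2)\<bar>"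
      using mult_left_le[of "\<bar>x\<bar> ^ n" "\<bar>a (n + 2)\<bar>"] by simp
    then have "(\<bar>a (n + 2)\<bar> * \<bar>x\<bar> ^ n) * x^2 \<le> \<bar>a (n + 2)\<bar> * x^2"
      by (simp add: mult_right_mono)
    moreover have "\<bar>f (n + 2)\<bar> = (\<bar>a (n + 2)\<bar> * \<bar>x\<bar> ^ n) * x^2"
      by (simp add: f_def abs_mult power_abs power_add power2_eq_square)
    ultimately show "\<bar>f (n + 2)\<bar> \<le> \<bar>a (n + 2)\<bar> * x^2" by simp
    show "summable (\<lambda>n. \<bar>f (n + 2)\<bar>)" by (rule st)
    show "summable (\<lambda>n. \<bar>a (n + 2)\<bar> * x^2)"
      by (rule summable_mult2[OF summable_ignore_initial_segment[OF s]])
  qed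
  also have "\<dots> = (\<Sum>n. \<bar>a (n + 2)\<bar>) * x^2"
    by (rule suminf_mult2[OF summable_ignore_initial_segment[OF s], symmetric])
  also have "\<dots> \<le> (1 - \<bar>a 0\<bar> - \<bar>a 1\<bar>) * x^2"
    unfolding tail2 using le1 by (simp add: mult_right_mono)
  finally show ?thesis unfolding eq .
qed

lemma a0_eq: "a 0 = pser a 0"
  using Bnd[of 0] by simp

lemma no_rot:
  assumes L: "\<bar>L\<bar> < 1" and fx: "pser a L = L"
    and rot: "\<forall>w. norm w < 1 \<longrightarrow> MM (pser a L) (PP a (MM (-L) w)) = \<alpha> * w"
    and na: "norm \<alpha> = 1"
  shows False
proof -
  define m where "m u = (u - L) / (1 - L * u)" for u
  have E: "complex_of_real (m (pser a x)) = \<alpha> * complex_of_real (m x)" if x: "\<bar>x\<bar> < 1" for x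
  proof -
    define w where "w = MM L (of_real x)"
    have "norm w < 1" unfolding MM_def w_def by (rule Moebius_function_norm_lt_1) (use x L in auto)
    moreover have "MM (-L) w = of_real x" unfolding MM_def w_def
      by (rule Moebius_function_compose) (use x L in auto)
    ultimately have "MM L (PP a (of_real x)) = \<alpha> * w" using rot unfolding fx by metis
    then show ?thesis unfolding PP_real[OF s less_imp_le[OF x]] w_def MM_real m_def .
  qed
  define x0 where "x0 = (1/2 + L) / (1 + L/2)"
  have d0: "0 < 1 + L/2" using L by linarith
  have x0: "\<bar>x0\<bar> < 1"
  proof -
    have "\<bar>1/2 + L\<bar> < 1 + L/2" using L by linarith
    then show ?thesis unfolding x0_def using d0 by (simp add: abs_divide)
  qed
  have L2: "0 < 1 - L^2" using den_pos[OF L L] by (simp add: power2_eq_square)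
  have mx0: "m x0 = 1/2"
  proof -
    have e1: "x0 - L = (1 - L^2) / 2 / (1 + L/2)" unfolding x0_def using d0 by (simp add: field_simps power2_eq_square)
    have e2: "1 - L * x0 = (1 - L^2) / (1 + L/2)" unfolding x0_def using d0 by (simp add: field_simps power2_eq_square)
    have gen: "(A / 2 / B) / (A / B) = 1/2" if "A \<noteq> 0" "B \<noteq> 0" for A B :: real
      using that by (simp add: field_simps)
    show ?thesis unfolding m_def e1 e2 by (rule gen) (use d0 L2 in auto)
  qed
  define r where "r = 2 * m (pser a x0)"
  have ar: "\<alpha> = of_real r"
    using E[OF x0] unfolding mx0 r_def by (simp add: mult.commute)
  have r: "r = 1 \<or> r = -1" using na unfolding ar by auto
  have E': "m (pser a x) = r * m x" if "\<bar>x\<bar> < 1" for x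
    using E[OF that] unfolding ar by (metis of_real_eq_iff of_real_mult)
  have cross: "(pser a x - L) * (1 - L * x) = r * (x - L) * (1 - L * pser a x)" if x: "\<bar>x\<bar> < 1" for x
  proof -
    have d1: "0 < 1 - L * x" by (rule den_pos[OF L x])
    have d2: "0 < 1 - L * pser a x" by (rule den_pos[OF L p_lt1[OF x]])
    show ?thesis using E'[OF x] d1 d2 unfolding m_def by (simp add: field_simps)
  qed
  have h: "\<bar>(1::real)/2\<bar> < 1" "\<bar>-(1::real)/2\<bar> < 1" "\<bar>(0::real)\<bar> < 1" by auto
  from r show False
  proof
    assume r1: "r = 1"
    have "pser a x = x" if x: "\<bar>x\<bar> < 1" for x
    proof -
      have "(pser a x - x) * (1 - L^2) = 0" using cross[OF x] r1 by (simp add: algebra_simps power2_eq_square)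
      then show ?thesis using L2 by simp
    qed
    from this[OF h(3)] this[OF h(1)] have "a 0 = 0" "pser a (1/2) = 1/2" using a0_eq by auto
    moreover have "\<bar>pser a (1/2) - a 0 - a 1 * (1/2)\<bar> \<le> (1 - \<bar>a 0\<bar> - \<bar>a 1\<bar>) * (1/2)^2"
      by (rule Bnd) simp
    ultimately have "\<bar>1/2 - a 1 * (1/2)\<bar> \<le> (1 - \<bar>a 1\<bar>) * (1/2)^2" by simp
    then show False using a1 by (simp add: power2_eq_square abs_if split: if_splits)
  next
    assume r1: "r = -1"
    define c where "c = 2 * L / (1 + L^2)"
    have q: "0 < 1 + L^2" by (simp add: add_pos_nonneg)
    have U: "pser a x * (1 - c * x) = c - x" if x: "\<bar>x\<bar> < 1" for x
    proof -
      have "pser a x * (1 + L^2 - 2 * L * x) = 2 * L - (1 + L^2) * x"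
        using cross[OF x] r1 by (simp add: algebra_simps power2_eq_square)
      then show ?thesis unfolding c_def using q by (simp add: field_simps)
    qed
    have "a 0 = c" using U[OF h(3)] a0_eq by simp
    then have c1: "\<bar>c\<bar> < 1" and ca: "\<bar>c\<bar> + \<bar>a 1\<bar> \<le> 1" using a0 a01 by auto
    show False
    proof (cases "0 \<le> c")
      case True
      have "pser a (1/2) * (1 - c/2) = c - 1/2" using U[OF h(1)] by simp
      moreover have "\<bar>pser a (1/2) - c - a 1 / 2\<bar> \<le> (1 - c - \<bar>a 1\<bar>) / 4"
        using Bnd[of "1/2"] \<open>a 0 = c\<close> True by (simp add: power2_eq_square)
      ultimately show False using arith1[of c "a 1" "pser a (1/2)"] True c1 ca a1 by simp
    next
      case False
      have "pser a (-1/2) * (1 + c/2) = c + 1/2" using U[OF h(2)] by simp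
      then have "(- pser a (-1/2)) * (1 - (-c)/2) = (-c) - 1/2" by (simp add: algebra_simps)
      moreover have "\<bar>pser a (-1/2) - c + a 1 / 2\<bar> \<le> (1 - (-c) - \<bar>a 1\<bar>) / 4"
        using Bnd[of "-1/2"] \<open>a 0 = c\<close> False by (simp add: power2_eq_square)
      then have "\<bar>(- pser a (-1/2)) - (-c) - a 1 / 2\<bar> \<le> (1 - (-c) - \<bar>a 1\<bar>) / 4"
        by (simp add: abs_minus_commute algebra_simps)
      ultimately show False using arith1[of "-c" "a 1" "- pser a (-1/2)"] False c1 ca a1 by simp
    qed
  qed
qed

end


lemma dlt_nonneg: "\<bar>u::real\<bar> < 1 \<Longrightarrow> \<bar>v\<bar> < 1 \<Longrightarrow> 0 \<le> dlt u v"
  using den_pos[of u v] by (simp add: dlt_def)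

lemma dlt_tendsto:
  assumes "X \<longlonglongrightarrow> u" "1 - u * v \<noteq> 0"
  shows "(\<lambda>n. dlt (X n) v) \<longlonglongrightarrow> dlt u v"
  unfolding dlt_def using assms by (intro tendsto_intros) auto

theorem corollary3:
  fixes a :: "nat \<Rightarrow> real" and L :: real
  assumes coeff_bound: "\<And>i. -1 < a i \<and> a i < 1"
    and abs_summable: "summable (\<lambda>i. \<bar>a i\<bar>)"
    and abs_sum_le: "(\<Sum>i. \<bar>a i\<bar>) \<le> 1"
    and lim0: "(\<lambda>n. (pser a ^^ n) 0) \<longlonglongrightarrow> L"
  shows "\<forall>t\<in>{-1<..<1}. (\<lambda>n. (pser a ^^ n) t) \<longlonglongrightarrow> L"
proof
  interpret coefs a
    by unfold_locales (use coeff_bound abs_summable abs_sum_le in \<open>auto simp: abs_less_iff\<close>)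
  fix t :: real assume "t \<in> {-1<..<1}"
  then have t: "\<bar>t\<bar> < 1" by auto
  define p where "p = pser a"
  define x where "x n = (p ^^ n) 0" for n
  define y where "y n = (p ^^ n) t" for n
  have xs: "x (Suc n) = p (x n)" for n by (simp add: x_def)
  have ys: "y (Suc n) = p (y n)" for n by (simp add: y_def)
  have xin: "\<bar>x n\<bar> < 1" for n
    by (induction n) (auto simp: xs p_def p_lt1, simp add: x_def)
  have yin: "\<bar>y n\<bar> < 1" for n
    by (induction n) (auto simp: ys p_def p_lt1, simp add: y_def t)
  have xL: "x \<longlonglongrightarrow> L" using lim0 unfolding x_def p_def .
  have contp: "isCont p u" if "\<bar>u\<bar> < 1" for u
  proof -
    have sm: "summable (\<lambda>n. a n * 1 ^ n)"
      using summable_norm_cancel[of "\<lambda>n. a n * 1 ^ n"] ps_summable[OF abs_summable, of "1::real"] by simp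
    have "isCont (\<lambda>x. \<Sum>n. a n * x ^ n) u" by (rule isCont_powser[OF sm]) (use that in simp)
    then show ?thesis unfolding p_def pser_def .
  qed
  have dxy: "dlt (y n) (x n) \<le> \<bar>t\<bar>" for n
  proof (induction n)
    case 0 then show ?case by (simp add: x_def y_def dlt_def)
  next
    case (Suc n)
    have "dlt (y (Suc n)) (x (Suc n)) \<le> dlt (y n) (x n)"
      unfolding xs ys p_def by (rule SP(1)[OF yin xin])
    then show ?case using Suc by linarith
  qed
  have Lle: "\<bar>L\<bar> \<le> 1"
    by (rule LIMSEQ_le_const2[OF tendsto_rabs[OF xL]]) (use xin less_imp_le in blast)
  show "(\<lambda>n. (pser a ^^ n) t) \<longlonglongrightarrow> L"
    unfolding p_def[symmetric] y_def[symmetric]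
  proof (cases "\<bar>L\<bar> = 1")
    case True
    have bnd: "norm (y n - x n) \<le> \<bar>t\<bar> / (1 - \<bar>t\<bar>) * (1 - (x n)^2)" for n
    proof -
      have d: "0 < 1 - y n * x n" by (rule den_pos[OF yin xin])
      have h1: "\<bar>y n - x n\<bar> \<le> \<bar>t\<bar> * (1 - y n * x n)"
        using dxy[of n] d by (simp add: dlt_def pos_divide_le_eq)
      have "\<bar>x n * (x n - y n)\<bar> \<le> \<bar>x n - y n\<bar>"
        using xin[of n] by (simp add: abs_mult mult_left_le_one_le)
      moreover have "1 - y n * x n = (1 - (x n)^2) + x n * (x n - y n)"
        by (simp add: power2_eq_square algebra_simps)
      ultimately have h2: "1 - y n * x n \<le> (1 - (x n)^2) + \<bar>y n - x n\<bar>"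
        by (simp add: abs_minus_commute)
      have "\<bar>t\<bar> * (1 - y n * x n) \<le> \<bar>t\<bar> * ((1 - (x n)^2) + \<bar>y n - x n\<bar>)"
        using h2 by (simp add: mult_left_mono)
      with h1 have "\<bar>y n - x n\<bar> * (1 - \<bar>t\<bar>) \<le> \<bar>t\<bar> * (1 - (x n)^2)"
        by (simp add: algebra_simps)
      then show ?thesis using t by (simp add: pos_le_divide_eq mult.commute)
    qed
    have L2: "L^2 = 1" using True by (metis abs_power2 power2_abs power_one)
    have "(\<lambda>n. \<bar>t\<bar> / (1 - \<bar>t\<bar>) * (1 - (x n)^2)) \<longlonglongrightarrow> \<bar>t\<bar> / (1 - \<bar>t\<bar>) * (1 - L^2)"
      by (intro tendsto_intros xL)
    then have g0: "(\<lambda>n. \<bar>t\<bar> / (1 - \<bar>t\<bar>) * (1 - (x n)^2)) \<longlonglongrightarrow> 0" using L2 by simp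
    have "(\<lambda>n. y n - x n) \<longlonglongrightarrow> 0"
      by (rule Lim_null_comparison[OF _ g0]) (use bnd in auto)
    then have "(\<lambda>n. x n + (y n - x n)) \<longlonglongrightarrow> L + 0" by (intro tendsto_intros xL)
    then show "y \<longlonglongrightarrow> L" by simp
  next
    case False
    then have L: "\<bar>L\<bar> < 1" using Lle by simp
    have pL: "p L = L"
    proof -
      have "(\<lambda>n. p (x n)) \<longlonglongrightarrow> p L" by (rule isCont_tendsto_compose[OF contp[OF L] xL])
      moreover have "(\<lambda>n. p (x n)) \<longlonglongrightarrow> L" using LIMSEQ_Suc[OF xL] unfolding xs .
      ultimately show ?thesis using LIMSEQ_unique by blast
    qed
    define d where "d n = dlt (y n) L" for n
    have dstep: "d (Suc n) \<le> d n" for n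
      using SP(1)[OF yin L, of n] unfolding d_def ys p_def[symmetric] pL .
    have dnn: "0 \<le> d n" for n unfolding d_def by (rule dlt_nonneg[OF yin L])
    have "decseq d" by (rule decseq_SucI) (rule dstep)
    then obtain D where D: "d \<longlonglongrightarrow> D" and DL: "\<forall>i. D \<le> d i"
      using decseq_convergent[of d 0] dnn by blast
    have D0: "0 \<le> D" by (rule LIMSEQ_le_const[OF D]) (use dnn in auto)
    have "D = 0"
    proof (rule ccontr)
      assume "D \<noteq> 0"
      with D0 have Dpos: "0 < D" by simp
      have "seq_compact {-1..1::real}" by (rule compact_imp_seq_compact[OF compact_Icc])
      moreover have "\<forall>n. y n \<in> {-1..1}"
      proof
        fix n show "y n \<in> {-1..1}" using yin[of n] by (simp add: abs_less_iff)
      qed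
      ultimately obtain z r where z: "z \<in> {-1..1}" and r: "strict_mono r" and yr: "(y \<circ> r) \<longlonglongrightarrow> z"
        by (rule seq_compactE)
      have yr': "(\<lambda>j. y (r j)) \<longlonglongrightarrow> z" using yr by (simp add: o_def)
      define d0 where "d0 = d 0"
      have d0: "d0 < 1"
      proof -
        have "0 < (1 - t) * (1 + L)" "0 < (1 + t) * (1 - L)" using t L by (auto intro!: mult_pos_pos)
        then have "\<bar>t - L\<bar> < 1 - t * L" by (simp add: algebra_simps abs_less_iff)
        moreover have "0 < 1 - t * L" by (rule den_pos[OF t L])
        ultimately show ?thesis by (simp add: d0_def d_def y_def dlt_def)
      qed
      have ineq: "\<bar>y n - L\<bar> \<le> d0 * (1 - y n * L)" for n
      proof -
        have "d n \<le> d0" unfolding d0_def using \<open>decseq d\<close> by (simp add: decseq_def)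
        moreover have "0 < 1 - y n * L" by (rule den_pos[OF yin L])
        ultimately show ?thesis by (simp add: d_def dlt_def pos_divide_le_eq mult.commute)
      qed
      have zineq: "\<bar>z - L\<bar> \<le> d0 * (1 - z * L)"
      proof (rule LIMSEQ_le)
        show "(\<lambda>j. \<bar>y (r j) - L\<bar>) \<longlonglongrightarrow> \<bar>z - L\<bar>" by (intro tendsto_intros yr')
        show "(\<lambda>j. d0 * (1 - y (r j) * L)) \<longlonglongrightarrow> d0 * (1 - z * L)" by (intro tendsto_intros yr')
        show "\<exists>N. \<forall>n\<ge>N. \<bar>y (r n) - L\<bar> \<le> d0 * (1 - y (r n) * L)" using ineq by blast
      qed
      have zin: "\<bar>z\<bar> < 1"
      proof -
        have "z \<noteq> 1"
        proof
          assume "z = 1"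
          then have "(1 - L) * 1 \<le> (1 - L) * d0" using zineq L by (simp add: abs_le_iff algebra_simps)
          then show False using d0 L by (simp add: abs_less_iff mult_le_cancel_left)
        qed
        moreover have "z \<noteq> -1"
        proof
          assume "z = -1"
          then have "(1 + L) * 1 \<le> (1 + L) * d0" using zineq L by (simp add: abs_le_iff algebra_simps)
          then show False using d0 L by (simp add: abs_less_iff mult_le_cancel_left)
        qed
        ultimately show ?thesis using z by auto
      qed
      have dz: "dlt z L = D"
      proof -
        have "(\<lambda>j. d (r j)) \<longlonglongrightarrow> D" using LIMSEQ_subseq_LIMSEQ[OF D r] by (simp add: o_def)
        moreover have "(\<lambda>j. d (r j)) \<longlonglongrightarrow> dlt z L" unfolding d_def
          by (rule dlt_tendsto[OF yr']) (use den_pos[OF zin L] in simp)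
        ultimately show ?thesis using LIMSEQ_unique by blast
      qed
      have dpz: "dlt (p z) L = D"
      proof -
        have "(\<lambda>j. d (Suc (r j))) \<longlonglongrightarrow> D"
          using LIMSEQ_subseq_LIMSEQ[OF LIMSEQ_Suc[OF D] r] by (simp add: o_def)
        moreover have "(\<lambda>j. p (y (r j))) \<longlonglongrightarrow> p z" by (rule isCont_tendsto_compose[OF contp[OF zin] yr'])
        then have "(\<lambda>j. d (Suc (r j))) \<longlonglongrightarrow> dlt (p z) L" unfolding d_def ys
          by (rule dlt_tendsto) (use den_pos[OF p_lt1[OF zin] L] in \<open>simp add: p_def\<close>)
        ultimately show ?thesis using LIMSEQ_unique by blast
      qed
      have "z \<noteq> L" using dz Dpos by (auto simp: dlt_def)
      moreover have "dlt (pser a z) (pser a L) = dlt z L"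
        using dz dpz pL unfolding p_def by simp
      ultimately obtain \<alpha> where "\<forall>w. norm w < 1 \<longrightarrow> MM (pser a L) (PP a (MM (-L) w)) = \<alpha> * w"
        and "norm \<alpha> = 1"
        using SP(2)[OF zin L] by blast
      then show False using no_rot[OF L] pL unfolding p_def by blast
    qed
    have "(\<lambda>n. y n - L) \<longlonglongrightarrow> 0"
    proof (rule Lim_null_comparison)
      show "\<forall>\<^sub>F n in sequentially. norm (y n - L) \<le> 2 * d n"
      proof (intro always_eventually allI)
        fix n
        have dp: "0 < 1 - y n * L" by (rule den_pos[OF yin L])
        have "1 - y n * L \<le> 2" using yin[of n] L
          by (smt (verit) abs_mult abs_le_iff mult_le_one abs_ge_zero less_imp_le)
        have "\<bar>y n - L\<bar> = d n * (1 - y n * L)" using dp by (simp add: d_def dlt_def)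
        also have "\<dots> \<le> d n * 2" by (rule mult_left_mono) (use \<open>1 - y n * L \<le> 2\<close> dnn in auto)
        finally have "\<bar>y n - L\<bar> \<le> d n * 2" .
        then show "norm (y n - L) \<le> 2 * d n" by simp
      qed
      show "(\<lambda>n. 2 * d n) \<longlonglongrightarrow> 0" using tendsto_mult[OF tendsto_const D] \<open>D = 0\<close> by simp
    qed
    then have "(\<lambda>n. (y n - L) + L) \<longlonglongrightarrow> 0 + L" by (intro tendsto_intros)
    then show "y \<longlonglongrightarrow> L" by simp
  qed
qed

end
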